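(* Suppose that $A$ is an algorithm with the following properties: $A$ is given $N$, an accuracy parameter $\epsilon>0$, a confidence parameter $\delta>0$, and distinct non-negative integers $0=a_1,\dots,a_k$; $A$ is provided with access to i.i.d. draws from a distribution $\mathbf{S}=a_2\mathbf{S}_2+\cdots+a_k\mathbf{S}_k$ where the $\mathbf{S}_i$ are independent unknown PBD$_N$ distributions; for all $N$, $A$ makes $m(a_1,\dots,a_k,\epsilon,\delta)$ draws from $\mathbf{S}$ and with probability at least $1-\delta$ outputs a hypothesis $\tilde{\mathbf{S}}$ such that $d_{TV}(\mathbf{S},\tilde{\mathbf{S}})\le\epsilon$. Then there is an algorithm $A'$ with the following properties: $A'$ is given $N,0=a_1,\dots,a_k,\epsilon,\delta$ and is provided with access to i.i.d. draws from $\mathbf{T}':=(\mathbf{T}\bmod a_k)$ where $\mathbf{T}=a_2\mathbf{T}_2+\cdots+a_{k-1}\mathbf{T}_{k-1}$ and the $\mathbf{T}_i$ are independent PBD$_N$ distributions; $A'$ makes $m'=m(a_1,\dots,a_k,\epsilon,\delta/2)$ draws from $\mathbf{T}'$ and with probability $1-\delta$ outputs a hypothesis $\tilde{\mathbf{T}}'$ such that $d_{TV}(\mathbf{T}',\tilde{\mathbf{T}}')\le\epsilon$.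
   Context: A PBD$_N$ (Poisson Binomial Distribution) is a sum of $N$ mutually independent (not necessarily identical) Bernoulli random variables. $d_{TV}$ denotes total variation distance. *)

theory Defs
  imports "HOL-Probability.Probability"
begin

primrec pbd :: "(nat \<Rightarrow> real) \<Rightarrow> nat \<Rightarrow> nat pmf" where
  "pbd p 0 = return_pmf 0"
| "pbd p (Suc n) = bind_pmf (pbd p n) (\<lambda>x. map_pmf (\<lambda>b. x + (if b then 1 else 0)) (bernoulli_pmf (p n)))"

definition PBD :: "nat \<Rightarrow> nat pmf set" where
  "PBD N = {pbd p N | p. \<forall>i<N. 0 \<le> p i \<and> p i \<le> 1}"

fun lin_comb :: "nat list \<Rightarrow> nat pmf list \<Rightarrow> nat pmf" where
  "lin_comb (c # cs) (D # Ds) =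
     bind_pmf D (\<lambda>x. map_pmf (\<lambda>y. c * x + y) (lin_comb cs Ds))"
| "lin_comb _ _ = return_pmf 0"

primrec iid :: "nat \<Rightarrow> 'a pmf \<Rightarrow> 'a list pmf" where
  "iid 0 D = return_pmf []"
| "iid (Suc n) D = bind_pmf D (\<lambda>x. map_pmf (\<lambda>xs. x # xs) (iid n D))"

definition dtv :: "'a pmf \<Rightarrow> 'a pmf \<Rightarrow> real" where
  "dtv P Q = (SUP E. \<bar>measure_pmf.prob P E - measure_pmf.prob Q E\<bar>)"

definition valid_weights :: "nat list \<Rightarrow> bool" where
  "valid_weights a \<longleftrightarrow> 2 \<le> length a \<and> hd a = 0 \<and> distinct a"

definition run_learner ::
  "(nat \<Rightarrow> real \<Rightarrow> real \<Rightarrow> nat list \<Rightarrow> nat list \<Rightarrow> nat pmf pmf)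
   \<Rightarrow> nat \<Rightarrow> real \<Rightarrow> real \<Rightarrow> nat list \<Rightarrow> nat \<Rightarrow> nat pmf \<Rightarrow> nat pmf pmf" where
  "run_learner L N eps delta a q D = bind_pmf (iid q D) (L N eps delta a)"

end

theory Submission
  imports Defs
begin

lemma integral_bind_pmf_bounded:
  fixes h :: "'b \<Rightarrow> real" assumes "\<And>x. \<bar>h x\<bar> \<le> B"
  shows "measure_pmf.expectation (bind_pmf M N) h = measure_pmf.expectation M (\<lambda>x. measure_pmf.expectation (N x) h)"
  unfolding measure_pmf_bind
  apply (rule integral_bind[where K="count_space UNIV" and B=B and B'=1])
  using assms measurable_measure_pmf[of N] by (auto simp: measure_pmf.finite_measure)

lemma pmf_integrable_bounded:
  fixes h :: "'a \<Rightarrow> real" assumes "\<And>x. \<bar>h x\<bar> \<le> B"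
  shows "integrable (measure_pmf P) h"
  by (rule measure_pmf.integrable_const_bound[where B=B]) (auto simp: assms)

lemma expectation_01:
  fixes h :: "'a \<Rightarrow> real" assumes "\<And>x. 0 \<le> h x \<and> h x \<le> 1"
  shows "0 \<le> measure_pmf.expectation P h \<and> measure_pmf.expectation P h \<le> 1"
proof
  show "0 \<le> measure_pmf.expectation P h" using assms by (simp add: integral_nonneg_AE)
  have "measure_pmf.expectation P h \<le> measure_pmf.expectation P (\<lambda>_. 1)"
    apply (rule integral_mono)
    using assms by (auto intro: pmf_integrable_bounded[where B=1])
  then show "measure_pmf.expectation P h \<le> 1" by simp
qed

definition tvc :: "'a pmf \<Rightarrow> 'a pmf \<Rightarrow> real \<Rightarrow> bool" where
  "tvc P Q d \<longleftrightarrow> (\<forall>h. (\<forall>x. 0 \<le> h x \<and> h x \<le> 1) \<longrightarrow>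
      \<bar>measure_pmf.expectation P h - measure_pmf.expectation Q h\<bar> \<le> d)"

lemma tvc_refl: "tvc P P 0" by (simp add: tvc_def)

lemma tvc_mono: "tvc P Q d \<Longrightarrow> d \<le> d' \<Longrightarrow> tvc P Q d'"
  unfolding tvc_def by (meson order_trans)

lemma tvc_trans: "tvc P Q d1 \<Longrightarrow> tvc Q R d2 \<Longrightarrow> tvc P R (d1 + d2)"
  unfolding tvc_def
proof (intro allI impI)
  fix h :: "'a \<Rightarrow> real" assume "\<forall>x. 0 \<le> h x \<and> h x \<le> 1"
  moreover assume "\<forall>h. (\<forall>x. 0 \<le> h x \<and> h x \<le> 1) \<longrightarrow> \<bar>measure_pmf.expectation P h - measure_pmf.expectation Q h\<bar> \<le> d1"
    "\<forall>h. (\<forall>x. 0 \<le> h x \<and> h x \<le> 1) \<longrightarrow> \<bar>measure_pmf.expectation Q h - measure_pmf.expectation R h\<bar> \<le> d2"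
  ultimately have "\<bar>measure_pmf.expectation P h - measure_pmf.expectation Q h\<bar> \<le> d1"
    "\<bar>measure_pmf.expectation Q h - measure_pmf.expectation R h\<bar> \<le> d2" by blast+
  then show "\<bar>measure_pmf.expectation P h - measure_pmf.expectation R h\<bar> \<le> d1 + d2" by linarith
qed

lemma tvc_map: "tvc P Q d \<Longrightarrow> tvc (map_pmf f P) (map_pmf f Q) d"
  unfolding tvc_def by simp

lemma tvc_bind:
  assumes "tvc P Q d1" and "\<And>x. x \<in> set_pmf P \<Longrightarrow> tvc (f x) (g x) d2"
  shows "tvc (bind_pmf P f) (bind_pmf Q g) (d1 + d2)"
  unfolding tvc_def
proof (intro allI impI)
  fix h :: "'b \<Rightarrow> real" assume h: "\<forall>x. 0 \<le> h x \<and> h x \<le> 1"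
  have hb: "\<bar>h x\<bar> \<le> 1" for x using h[rule_format, of x] by (simp add: abs_le_iff)
  define F where "F x = measure_pmf.expectation (f x) h" for x
  define G where "G x = measure_pmf.expectation (g x) h" for x
  have F01: "0 \<le> F x \<and> F x \<le> 1" for x unfolding F_def using expectation_01 h by blast
  have G01: "0 \<le> G x \<and> G x \<le> 1" for x unfolding G_def using expectation_01 h by blast
  have e1: "measure_pmf.expectation (bind_pmf P f) h = measure_pmf.expectation P F"
    unfolding F_def by (rule integral_bind_pmf_bounded[OF hb])
  have e2: "measure_pmf.expectation (bind_pmf Q g) h = measure_pmf.expectation Q G"
    unfolding G_def by (rule integral_bind_pmf_bounded[OF hb])
  have intF: "integrable (measure_pmf P) F" by (rule pmf_integrable_bounded[where B=1]) (use F01 in auto)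
  have intG: "integrable (measure_pmf P) G" by (rule pmf_integrable_bounded[where B=1]) (use G01 in auto)
  have FG: "\<bar>F x - G x\<bar> \<le> d2" if "x \<in> set_pmf P" for x
    using assms(2)[OF that] h unfolding tvc_def F_def G_def by blast
  have FG': "AE x in measure_pmf P. -d2 \<le> F x - G x \<and> F x - G x \<le> d2"
  proof (rule AE_pmfI)
    fix x assume "x \<in> set_pmf P"
    from FG[OF this] show "-d2 \<le> F x - G x \<and> F x - G x \<le> d2" by linarith
  qed
  have "measure_pmf.expectation P F - measure_pmf.expectation P G = measure_pmf.expectation P (\<lambda>x. F x - G x)"
    using intF intG by simp
  also have "\<dots> \<le> measure_pmf.expectation P (\<lambda>_. d2)"
    apply (rule integral_mono_AE)
    using intF intG FG' by (auto elim: eventually_mono)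
  finally have a1: "measure_pmf.expectation P F - measure_pmf.expectation P G \<le> d2" by simp
  have "measure_pmf.expectation P (\<lambda>_. -d2) \<le> measure_pmf.expectation P (\<lambda>x. F x - G x)"
    apply (rule integral_mono_AE)
    using intF intG FG' by (auto elim: eventually_mono)
  also have "\<dots> = measure_pmf.expectation P F - measure_pmf.expectation P G"
    using intF intG by simp
  finally have a2: "-d2 \<le> measure_pmf.expectation P F - measure_pmf.expectation P G" by simp
  have a3: "\<bar>measure_pmf.expectation P G - measure_pmf.expectation Q G\<bar> \<le> d1"
    using assms(1) G01 unfolding tvc_def by blast
  show "\<bar>measure_pmf.expectation (bind_pmf P f) h - measure_pmf.expectation (bind_pmf Q g) h\<bar> \<le> d1 + d2"
    unfolding e1 e2 using a1 a2 a3 by (simp add: abs_le_iff)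
qed

lemma tvc_prob:
  assumes "tvc P Q d" shows "\<bar>measure_pmf.prob P E - measure_pmf.prob Q E\<bar> \<le> d"
proof -
  have "(\<forall>x. 0 \<le> (indicator E x::real) \<and> (indicator E x::real) \<le> 1)" by (simp add: indicator_def)
  then have "\<bar>measure_pmf.expectation P (indicator E) - measure_pmf.expectation Q (indicator E)\<bar> \<le> d"
    using assms unfolding tvc_def by blast
  then show ?thesis by simp
qed

lemma tvc_iid: "tvc P Q d \<Longrightarrow> tvc (iid m P) (iid m Q) (real m * d)"
proof (induction m)
  case 0 then show ?case by (simp add: tvc_refl)
next
  case (Suc m)
  have "tvc (iid (Suc m) P) (iid (Suc m) Q) (d + real m * d)"
    unfolding iid.simps
    by (rule tvc_bind[OF Suc.prems]) (rule tvc_map[OF Suc.IH[OF Suc.prems]])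
  then show ?case by (simp add: algebra_simps)
qed

lemma central_rec_nat: "Suc r * ((2*Suc r) choose Suc r) = 2 * (2*r+1) * ((2*r) choose r)"
proof -
  have a: "Suc r * (Suc (2*r+1) choose Suc r) = Suc (2*r+1) * ((2*r+1) choose r)"
    by (rule Suc_times_binomial)
  have b: "Suc r * (Suc (2*r) choose Suc r) = Suc (2*r) * ((2*r) choose r)"
    by (rule Suc_times_binomial)
  have c: "(2*r+1) choose r = (2*r+1) choose (Suc r)"
  proof -
    have "2*r+1-r = Suc r" by simp
    then show ?thesis using binomial_symmetric[of r "2*r+1"] by (simp del: binomial_Suc_Suc)
  qed
  have "Suc r * (Suc r * ((2*Suc r) choose Suc r)) = Suc r * (2 * (2*r+1) * ((2*r) choose r))"
  proof -
    have "Suc r * (Suc r * ((2*Suc r) choose Suc r)) = Suc r * (Suc (2*r+1) * ((2*r+1) choose r))"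
      using a by (simp del: binomial_Suc_Suc)
    also have "\<dots> = Suc (2*r+1) * (Suc r * (Suc (2*r) choose Suc r))" using c by (simp del: binomial_Suc_Suc)
    also have "\<dots> = Suc (2*r+1) * (Suc (2*r) * ((2*r) choose r))" using b by (simp del: binomial_Suc_Suc)
    also have "\<dots> = Suc r * (2 * (2*r+1) * ((2*r) choose r))" by (simp del: binomial_Suc_Suc)
    finally show ?thesis .
  qed
  then show ?thesis by (metis mult_cancel1 nat.distinct(1))
qed

lemma central_bound_mult: "(real ((2*r) choose r))^2 * (2*r+1) \<le> 16^r"
proof (induction r)
  case 0 then show ?case by simp
next
  case (Suc r)
  define cc where "cc = real ((2*r) choose r)"
  define dd where "dd = real ((2*Suc r) choose Suc r)"
  define t where "t = real r"
  have rec: "(t+1) * dd = 2*(2*t+1)*cc"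
    unfolding t_def cc_def dd_def
    using arg_cong[OF central_rec_nat[of r], of real] by (simp del: binomial_Suc_Suc add: algebra_simps)
  have IH: "cc^2 * (2*t+1) \<le> 16^r" using Suc.IH unfolding cc_def t_def by (simp add: add.commute)
  have t0: "0 \<le> t" unfolding t_def by simp
  have "(t+1)^2 * (dd^2 * (2*t+3)) = 4*(2*t+1)*(2*t+3) * (cc^2 * (2*t+1))"
  proof -
    have "(t+1)^2 * (dd^2 * (2*t+3)) = ((t+1) * dd)^2 * (2*t+3)" by (simp add: power_mult_distrib)
    also have "\<dots> = 4*(2*t+1)*(2*t+3) * (cc^2 * (2*t+1))" unfolding rec by (simp add: power2_eq_square algebra_simps)
    finally show ?thesis .
  qed
  also have "\<dots> \<le> 4*(2*t+1)*(2*t+3) * 16^r"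
    by (rule mult_left_mono[OF IH]) (use t0 in simp)
  also have "\<dots> \<le> (t+1)^2 * 16^(Suc r)"
  proof -
    have "4*(2*t+1)*(2*t+3) \<le> 16 * (t+1)^2" by (simp add: power2_eq_square algebra_simps)
    then have "4*(2*t+1)*(2*t+3) * 16^r \<le> 16 * (t+1)^2 * 16^r" by (rule mult_right_mono) simp
    then show ?thesis by (simp add: algebra_simps)
  qed
  finally have "dd^2 * (2*t+3) \<le> 16^(Suc r)"
    using t0 by (simp add: mult_le_cancel_left_pos)
  then show ?case unfolding dd_def t_def by (simp del: binomial_Suc_Suc add: algebra_simps)
qed

lemma abel_sum:
  fixes f h :: "nat \<Rightarrow> real" assumes "f (Suc n) = 0"
  shows "(\<Sum>k\<le>n. f k * h (Suc k)) - (\<Sum>k\<le>n. f k * h k)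
       = (\<Sum>k<Suc (Suc n). h k * ((if k = 0 then 0 else f (k-1)) - f k))"
proof -
  have s1: "(\<Sum>k<Suc (Suc n). h k * (if k = 0 then 0 else f (k-1))) = (\<Sum>k\<le>n. f k * h (Suc k))"
    by (subst sum.lessThan_Suc_shift) (simp add: lessThan_Suc_atMost mult.commute)
  have s2: "(\<Sum>k<Suc (Suc n). h k * f k) = (\<Sum>k\<le>n. f k * h k)"
    using assms by (simp add: lessThan_Suc_atMost mult.commute)
  show ?thesis unfolding right_diff_distrib sum_subtractf s1 s2 ..
qed

lemma unimodal_sum:
  fixes f :: "nat \<Rightarrow> real"
  assumes up: "\<And>k. k < r \<Longrightarrow> f k \<le> f (Suc k)" and down: "\<And>k. r \<le> k \<Longrightarrow> f (Suc k) \<le> f k"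
    and f0: "0 \<le> f 0" and fe: "f (Suc (2*r)) = 0"
  shows "(\<Sum>k<Suc (Suc (2*r)). max 0 ((if k = 0 then 0 else f (k-1)) - f k)) = f r"
proof -
  define g where "g k = max 0 ((if k = 0 then 0 else f (k-1)) - f k)" for k
  have "(\<Sum>k<Suc (Suc (2*r)). g k) = (\<Sum>k\<in>{0..<Suc r}. g k) + (\<Sum>k\<in>{Suc r..<Suc (Suc (2*r))}. g k)"
    by (subst sum.atLeastLessThan_concat) (auto simp: atLeast0LessThan)
  also have "(\<Sum>k\<in>{0..<Suc r}. g k) = 0"
  proof (rule sum.neutral, intro ballI)
    fix k assume "k \<in> {0..<Suc r}"
    then show "g k = 0" unfolding g_def using f0 up[of "k-1"] by (cases k) auto
  qed
  also have "(\<Sum>k\<in>{Suc r..<Suc (Suc (2*r))}. g k) = (\<Sum>k\<in>{r..<Suc (2*r)}. g (Suc k))"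
    by (rule sum.shift_bounds_Suc_ivl)
  also have "\<dots> = (\<Sum>k\<in>{r..<Suc (2*r)}. -(f (Suc k) - f k))"
    by (rule sum.cong) (auto simp: g_def down)
  also have "\<dots> = -(f (Suc (2*r)) - f r)"
    by (subst sum_negf, subst sum_Suc_diff') simp_all
  finally show ?thesis unfolding g_def using fe by simp
qed

lemma tvc_onesided:
  assumes "\<And>h. (\<forall>x. 0 \<le> h x \<and> h x \<le> 1) \<Longrightarrow>
      measure_pmf.expectation P h - measure_pmf.expectation Q h \<le> d"
  shows "tvc P Q d"
  unfolding tvc_def
proof (intro allI impI)
  fix h :: "'a \<Rightarrow> real" assume h: "\<forall>x. 0 \<le> h x \<and> h x \<le> 1"
  have h': "\<forall>x. 0 \<le> 1 - h x \<and> 1 - h x \<le> 1" using h by auto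
  have hb: "\<bar>h x\<bar> \<le> 1" for x using h[rule_format, of x] by (simp add: abs_le_iff)
  have e: "measure_pmf.expectation M (\<lambda>x. 1 - h x) = 1 - measure_pmf.expectation M h" for M
    using pmf_integrable_bounded[OF hb, of M] by simp
  from assms[OF h] assms[OF h'] show "\<bar>measure_pmf.expectation P h - measure_pmf.expectation Q h\<bar> \<le> d"
    unfolding e by (simp add: abs_le_iff)
qed

lemma tvc_binomial_shift:
  "tvc (map_pmf Suc (binomial_pmf (2*r) (1/2))) (binomial_pmf (2*r) (1/2))
       (real ((2*r) choose r) / 4^r)"
proof (rule tvc_onesided)
  fix h :: "nat \<Rightarrow> real" assume h: "\<forall>x. 0 \<le> h x \<and> h x \<le> 1"
  define n where "n = 2*r"
  define f where "f k = real (n choose k) / 2^n" for k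
  have coef: "real (n choose k) * (1/2) ^ k * (1/2) ^ (n - k) = f k" for k
  proof (cases "k \<le> n")
    case True
    then have "(1/2::real) ^ k * (1/2) ^ (n - k) = (1/2)^n" by (simp add: power_add[symmetric])
    then show ?thesis unfolding f_def by (simp add: power_one_over)
  qed (simp add: f_def binomial_eq_0)
  have E1: "measure_pmf.expectation (map_pmf Suc (binomial_pmf n (1/2))) h = (\<Sum>k\<le>n. f k * h (Suc k))"
    by (simp add: expectation_binomial_pmf' coef)
  have E2: "measure_pmf.expectation (binomial_pmf n (1/2)) h = (\<Sum>k\<le>n. f k * h k)"
    by (simp add: expectation_binomial_pmf' coef)
  have fe: "f (Suc (2*r)) = 0" unfolding f_def n_def by simp
  have "(\<Sum>k\<le>n. f k * h (Suc k)) - (\<Sum>k\<le>n. f k * h k)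
       = (\<Sum>k<Suc (Suc n). h k * ((if k = 0 then 0 else f (k-1)) - f k))"
    by (rule abel_sum) (use fe n_def in simp)
  also have "\<dots> \<le> (\<Sum>k<Suc (Suc n). max 0 ((if k = 0 then 0 else f (k-1)) - f k))"
  proof (rule sum_mono)
    fix k
    have "0 \<le> h k" "h k \<le> 1" using h by auto
    then show "h k * ((if k = 0 then 0 else f (k-1)) - f k) \<le> max 0 ((if k = 0 then 0 else f (k-1)) - f k)"
      by (smt (verit, ccfv_SIG) mult_left_le_one_le mult_nonneg_nonpos mult_le_0_iff)
  qed
  also have "\<dots> = f r" unfolding n_def
  proof (rule unimodal_sum)
    fix k assume "k < r"
    then have "(2*r) choose k \<le> (2*r) choose (Suc k)" by (intro binomial_mono) auto
    then show "f k \<le> f (Suc k)" unfolding f_def n_def by (simp add: divide_right_mono)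
  next
    fix k assume "r \<le> k"
    have "(2*r) choose (Suc k) \<le> (2*r) choose k"
    proof (cases "Suc k \<le> 2*r")
      case True then show ?thesis using \<open>r \<le> k\<close> by (intro binomial_antimono) auto
    qed (simp add: binomial_eq_0)
    then show "f (Suc k) \<le> f k" unfolding f_def n_def by (simp add: divide_right_mono)
  qed (use fe in \<open>auto simp: f_def\<close>)
  also have "f r = real ((2*r) choose r) / 4^r" unfolding f_def n_def by (simp add: power_mult)
  finally show "measure_pmf.expectation (map_pmf Suc (binomial_pmf (2*r) (1/2))) h
      - measure_pmf.expectation (binomial_pmf (2*r) (1/2)) h \<le> real ((2*r) choose r) / 4^r"
    using E1 E2 unfolding n_def by simp
qed

lemma bernoulli_pmf_zero: "bernoulli_pmf 0 = return_pmf False"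
  by (rule pmf_eqI) (case_tac i, auto)

lemma pbd_cong: "(\<And>i. i < n \<Longrightarrow> p i = q i) \<Longrightarrow> pbd p n = pbd q n"
  by (induction n) auto

lemma pbd_zero_ext: "(\<And>i. i \<ge> N \<Longrightarrow> p i = 0) \<Longrightarrow> pbd p (N + j) = pbd p N"
  by (induction j) (auto simp: bernoulli_pmf_zero bind_return_pmf')

lemma PBD_mono: assumes "T \<in> PBD N" "N \<le> N'" shows "T \<in> PBD N'"
proof -
  obtain p where T: "T = pbd p N" and p: "\<forall>i<N. 0 \<le> p i \<and> p i \<le> 1" using assms(1) unfolding PBD_def by auto
  define q where "q i = (if i < N then p i else 0)" for i
  have "pbd q N = T" unfolding T by (rule pbd_cong) (simp add: q_def)
  moreover have "pbd q N' = pbd q N"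
    using pbd_zero_ext[of N q "N' - N"] assms(2) by (simp add: q_def)
  moreover have "\<forall>i<N'. 0 \<le> q i \<and> q i \<le> 1" using p by (simp add: q_def)
  ultimately show ?thesis unfolding PBD_def mem_Collect_eq by (intro exI[of _ q]) simp
qed

lemma pbd_binom: "p \<in> {0..1} \<Longrightarrow> pbd (\<lambda>_. p) n = binomial_pmf n p"
proof (induction n)
  case 0 then show ?case by (simp add: binomial_pmf_0)
next
  case (Suc n)
  show ?case
    unfolding pbd.simps Suc.IH[OF Suc.prems] binomial_pmf_Suc[OF Suc.prems]
    by (subst bind_commute_pmf) (simp add: map_pmf_def add.commute)
qed

lemma set_pbd: "x \<in> set_pmf (pbd p n) \<Longrightarrow> x \<le> n"
proof (induction n arbitrary: x)
  case (Suc n)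
  then obtain y b where "y \<in> set_pmf (pbd p n)" "x = y + (if b then 1 else 0)" by auto
  with Suc.IH show ?case by fastforce
qed simp

lemma set_lin_comb:
  "(\<And>D. D \<in> set Ds \<Longrightarrow> \<forall>x\<in>set_pmf D. x \<le> N) \<Longrightarrow> x \<in> set_pmf (lin_comb cs Ds) \<Longrightarrow> x \<le> sum_list cs * N"
proof (induction cs Ds arbitrary: x rule: lin_comb.induct)
  case (1 c cs D Ds)
  from "1.prems"(2) obtain y z where y: "y \<in> set_pmf D" and z: "z \<in> set_pmf (lin_comb cs Ds)" and x: "x = c*y + z"
    by auto
  have "y \<le> N" using "1.prems"(1) y by auto
  then have a: "c * y \<le> c * N" by (rule mult_le_mono2)
  have b: "z \<le> sum_list cs * N" using "1.IH"[OF y] "1.prems"(1) z by auto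
  have "x \<le> c * N + sum_list cs * N" using a b x by linarith
  then show ?case by (simp add: algebra_simps)
qed auto

lemma lin_comb_snoc:
  "length cs = length Ds \<Longrightarrow>
   lin_comb (cs @ [c]) (Ds @ [D]) = bind_pmf (lin_comb cs Ds) (\<lambda>x. map_pmf (\<lambda>z. x + c*z) D)"
proof (induction cs Ds rule: list_induct2)
  case Nil
  then show ?case by (simp add: bind_return_pmf map_pmf_def)
next
  case (Cons c0 cs D0 Ds)
  then show ?case
    by (simp add: map_bind_pmf bind_map_pmf bind_assoc_pmf map_pmf_comp add.assoc)
qed

primrec noise :: "(nat \<Rightarrow> nat pmf) \<Rightarrow> nat list \<Rightarrow> nat list pmf" where
  "noise K [] = return_pmf []"
| "noise K (x # xs) = bind_pmf (K x) (\<lambda>y. map_pmf (\<lambda>ys. y # ys) (noise K xs))"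

lemma iid_noise: "bind_pmf (iid m P) (noise K) = iid m (bind_pmf P K)"
proof (induction m)
  case 0 then show ?case by (simp add: bind_return_pmf)
next
  case (Suc m)
  have "bind_pmf (iid (Suc m) P) (noise K)
      = bind_pmf P (\<lambda>x. bind_pmf (iid m P) (\<lambda>xs. bind_pmf (K x) (\<lambda>y. map_pmf (\<lambda>ys. y # ys) (noise K xs))))"
    by (simp add: bind_map_pmf bind_assoc_pmf)
  also have "\<dots> = bind_pmf P (\<lambda>x. bind_pmf (K x) (\<lambda>y. map_pmf (\<lambda>ys. y # ys) (bind_pmf (iid m P) (noise K))))"
    by (subst bind_commute_pmf) (simp add: map_bind_pmf)
  also have "\<dots> = iid (Suc m) (bind_pmf P K)"
    by (simp add: Suc.IH bind_assoc_pmf)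
  finally show ?case .
qed

lemma dtv_map: "dtv (map_pmf f P) (map_pmf f Q) \<le> dtv P Q"
  unfolding dtv_def
proof (rule cSUP_least)
  fix E
  have bdd: "bdd_above (range (\<lambda>E. \<bar>measure_pmf.prob P E - measure_pmf.prob Q E\<bar>))"
  proof (rule bdd_aboveI[of _ 1])
    fix y assume "y \<in> range (\<lambda>E. \<bar>measure_pmf.prob P E - measure_pmf.prob Q E\<bar>)"
    then obtain E where "y = \<bar>measure_pmf.prob P E - measure_pmf.prob Q E\<bar>" by auto
    moreover have "measure_pmf.prob P E \<le> 1" "measure_pmf.prob Q E \<le> 1" "0 \<le> measure_pmf.prob P E" "0 \<le> measure_pmf.prob Q E"
      by auto
    ultimately show "y \<le> 1" by linarith
  qed
  show "\<bar>measure_pmf.prob (map_pmf f P) E - measure_pmf.prob (map_pmf f Q) E\<bar>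
        \<le> (SUP E. \<bar>measure_pmf.prob P E - measure_pmf.prob Q E\<bar>)"
    using cSUP_upper[OF UNIV_I bdd, of "f -` E"] by simp
qed simp

lemma tvc_sym: "tvc P Q d \<Longrightarrow> tvc Q P d"
  unfolding tvc_def by (simp add: abs_minus_commute)

lemma tvc_shift:
  "tvc (map_pmf (\<lambda>z. z + j) (binomial_pmf (2*r) (1/2))) (binomial_pmf (2*r) (1/2))
       (real j * (real ((2*r) choose r) / 4^r))"
proof (induction j)
  case 0 then show ?case by (simp add: tvc_refl)
next
  case (Suc j)
  define B where "B = binomial_pmf (2*r) (1/2)"
  have "map_pmf (\<lambda>z. z + Suc j) B = map_pmf Suc (map_pmf (\<lambda>z. z + j) B)" by (simp add: map_pmf_comp)
  moreover have "tvc (map_pmf Suc (map_pmf (\<lambda>z. z + j) B)) (map_pmf Suc B) (real j * (real ((2*r) choose r) / 4^r))"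
    using tvc_map[OF Suc.IH[folded B_def]] .
  ultimately have "tvc (map_pmf (\<lambda>z. z + Suc j) B) B (real j * (real ((2*r) choose r) / 4^r) + real ((2*r) choose r) / 4^r)"
    using tvc_trans tvc_binomial_shift[of r, folded B_def] by metis
  moreover have "real j * (real ((2*r) choose r) / 4^r) + real ((2*r) choose r) / 4^r
      = real (Suc j) * (real ((2*r) choose r) / 4^r)" by (simp add: field_simps)
  ultimately show ?case unfolding B_def by simp
qed

lemma final_arith:
  fixes X dl z :: real and R :: nat
  assumes X: "0 \<le> X" and dl: "dl > 0" and R: "R \<ge> nat \<lceil>(2*X/dl)^2\<rceil>" and z: "0 \<le> z" "z^2 * (2*R+1) \<le> 1"
  shows "X * z \<le> dl/2"
proof -
  have "(2*X/dl)^2 \<le> real R"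
  proof -
    have "(2*X/dl)^2 \<le> real_of_int \<lceil>(2*X/dl)^2\<rceil>" by (rule le_of_int_ceiling)
    also have "\<dots> = real (nat \<lceil>(2*X/dl)^2\<rceil>)" using zero_le_power2[of "2*X/dl"] by (intro of_nat_nat[symmetric]) linarith
    also have "\<dots> \<le> real R" using R by (simp only: of_nat_le_iff)
    finally show ?thesis .
  qed
  then have "(2*X)^2 / dl^2 \<le> real R" by (simp only: power_divide)
  then have R2: "(2*X)^2 \<le> real R * dl^2" using dl by (simp add: divide_le_eq)
  have "(X*z)^2 * (2*R+1) = X^2 * (z^2 * (2*R+1))" by (simp add: power_mult_distrib)
  also have "\<dots> \<le> X^2 * 1" by (rule mult_left_mono[OF z(2)]) simp
  also have "\<dots> \<le> (dl/2)^2 * (2*R+1)"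
  proof -
    have "4 * X^2 \<le> real R * dl^2" using R2 by (simp add: power_mult_distrib)
    moreover have "0 \<le> real R * dl^2" "0 \<le> dl^2" by simp_all
    moreover have "(2 * real R + 1) * dl^2 = 2 * (real R * dl^2) + dl^2" by (simp add: algebra_simps)
    ultimately have "4 * X^2 \<le> (2 * real R + 1) * dl^2" by linarith
    then show ?thesis by (simp add: power_divide algebra_simps)
  qed
  finally have "(X*z)^2 * (2*R+1) \<le> (dl/2)^2 * (2*R+1)" .
  then have "(X*z)^2 \<le> (dl/2)^2" by (rule mult_right_le_imp_le) simp
  then show ?thesis by (rule power2_le_imp_le) (use dl in simp)
qed

theorem theorem55:
  fixes A :: "nat \<Rightarrow> real \<Rightarrow> real \<Rightarrow> nat list \<Rightarrow> nat list \<Rightarrow> nat pmf pmf"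
    and m :: "nat list \<Rightarrow> real \<Rightarrow> real \<Rightarrow> nat"
  assumes A_learns:
    "\<forall>N eps delta a Ss. eps > 0 \<longrightarrow> delta > 0 \<longrightarrow> valid_weights a \<longrightarrow>
       length Ss = length a - 1 \<longrightarrow> (\<forall>S\<in>set Ss. S \<in> PBD N) \<longrightarrow>
       measure_pmf.prob (run_learner A N eps delta a (m a eps delta) (lin_comb (tl a) Ss))
         {H. dtv (lin_comb (tl a) Ss) H \<le> eps} \<ge> 1 - delta"
  shows
    "\<exists>A'. \<forall>N eps delta a Ts. eps > 0 \<longrightarrow> delta > 0 \<longrightarrow> valid_weights a \<longrightarrow>
       length Ts = length a - 2 \<longrightarrow> (\<forall>T\<in>set Ts. T \<in> PBD N) \<longrightarrow>
       (let T' = map_pmf (\<lambda>x. x mod last a) (lin_comb (butlast (tl a)) Ts) in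
        measure_pmf.prob (run_learner A' N eps delta a (m a eps (delta / 2)) T')
          {H. dtv T' H \<le> eps} \<ge> 1 - delta)"
proof -
  define r where "r N eps delta a =
     N + nat \<lceil>(2 * (real (m a eps (delta/2)) * real (sum_list a * N)) / delta)^2\<rceil>" for N eps delta a
  define K where "K N eps delta a x =
     map_pmf (\<lambda>z. x + last a * z) (binomial_pmf (2 * r N eps delta a) (1/2))" for N eps delta a x
  define A' where "A' N eps delta a xs = bind_pmf (noise (K N eps delta a) xs)
     (\<lambda>ys. map_pmf (\<lambda>H. map_pmf (\<lambda>x. x mod last a) H) (A (2 * r N eps delta a) eps (delta/2) a ys))"
    for N eps delta a xs
  show ?thesis
  proof (rule exI[of _ A'], intro allI impI)
    fix N :: nat and eps delta :: real and a :: "nat list" and Ts :: "nat pmf list"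
    assume eps: "eps > 0" and delta: "delta > 0" and va: "valid_weights a"
      and lenT: "length Ts = length a - 2" and TP: "\<forall>T\<in>set Ts. T \<in> PBD N"
    define c where "c = last a"
    define W where "W = butlast (tl a)"
    define R where "R = r N eps delta a"
    define B where "B = binomial_pmf (2*R) (1/2)"
    define mm where "mm = m a eps (delta/2)"
    define J where "J = sum_list a * N"
    define T where "T = lin_comb W Ts"
    define T' where "T' = map_pmf (\<lambda>x. x mod c) T"
    define Kx where "Kx x = map_pmf (\<lambda>z. x + c*z) B" for x
    define S where "S = bind_pmf T Kx"
    define Sim where "Sim = bind_pmf T' Kx"
    define AA where "AA ys = A (2*R) eps (delta/2) a ys" for ys
    define modc where "modc H = map_pmf (\<lambda>x. x mod c) H" for H :: "nat pmf"
    define z where "z = real ((2*R) choose R) / 4^R"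
    define G where "G = {H. dtv S H \<le> eps}"
    have len2: "2 \<le> length a" and hd0: "hd a = 0" and dist: "distinct a"
      using va unfolding valid_weights_def by auto
    have tla: "tl a = W @ [c]"
    proof -
      have "tl a \<noteq> []" using len2 by (cases a) auto
      then have "tl a = butlast (tl a) @ [last (tl a)]" by simp
      moreover have "last (tl a) = last a" using \<open>tl a \<noteq> []\<close> by (cases a) auto
      ultimately show ?thesis unfolding W_def c_def by simp
    qed
    have ha: "a = 0 # W @ [c]"
    proof -
      have "a \<noteq> []" using len2 by auto
      then have "a = hd a # tl a" by simp
      then show ?thesis using hd0 tla by simp
    qed
    have c0: "c > 0"
    proof -
      have "distinct (0 # W @ [c])" using dist ha by simp
      then show ?thesis by auto
    qed
    have lenW: "length W = length Ts" using lenT unfolding W_def by simp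
    have RN: "N \<le> R" unfolding R_def r_def by simp
    define Ss where "Ss = Ts @ [pbd (\<lambda>_. 1/2) (2*R)]"
    have SsP: "\<forall>S\<in>set Ss. S \<in> PBD (2*R)"
    proof
      fix S assume "S \<in> set Ss"
      then consider "S \<in> set Ts" | "S = pbd (\<lambda>_. 1/2) (2*R)" unfolding Ss_def by auto
      then show "S \<in> PBD (2*R)"
      proof cases
        case 1 then show ?thesis using TP RN PBD_mono by fastforce
      next
        case 2 then show ?thesis unfolding PBD_def by auto
      qed
    qed
    have lenS: "length Ss = length a - 1" unfolding Ss_def using lenT len2 by simp
    have S_eq: "lin_comb (tl a) Ss = S"
      unfolding tla Ss_def S_def T_def Kx_def B_def
      by (simp add: lin_comb_snoc[OF lenW] pbd_binom)
    have learn: "1 - delta/2 \<le> measure_pmf.prob (bind_pmf (iid mm S) AA) G"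
      using A_learns[rule_format, of eps "delta/2" a Ss "2*R"] eps delta va lenS SsP
      unfolding S_eq run_learner_def mm_def AA_def G_def by simp
    have TS: "modc S = T'"
      unfolding modc_def S_def T'_def Kx_def map_bind_pmf map_pmf_comp
      by (simp add: map_pmf_const map_pmf_def[symmetric])
    have Kx_eq: "K N eps delta a = Kx" unfolding K_def Kx_def B_def R_def c_def by auto
    have modc_eq: "modc = map_pmf (\<lambda>x. x mod c)" by (rule ext) (simp add: modc_def)
    have run': "run_learner A' N eps delta a mm T' = map_pmf modc (bind_pmf (iid mm Sim) AA)"
    proof -
      define F where "F ys = map_pmf modc (AA ys)" for ys
      have "run_learner A' N eps delta a mm T' = bind_pmf (iid mm T') (\<lambda>xs. bind_pmf (noise Kx xs) F)"
        unfolding run_learner_def A'_def Kx_eq F_def AA_def modc_eq R_def c_def by (rule refl)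
      also have "\<dots> = bind_pmf (bind_pmf (iid mm T') (noise Kx)) F"
        by (rule bind_assoc_pmf[symmetric])
      also have "\<dots> = bind_pmf (iid mm Sim) F" unfolding iid_noise Sim_def by (rule refl)
      also have "\<dots> = map_pmf modc (bind_pmf (iid mm Sim) AA)" unfolding F_def map_bind_pmf by (rule refl)
      finally show ?thesis .
    qed
    have sub: "G \<subseteq> modc -` {H. dtv T' H \<le> eps}"
    proof
      fix H assume "H \<in> G"
      then have "dtv S H \<le> eps" unfolding G_def by simp
      moreover have "dtv T' (modc H) \<le> dtv S H" unfolding TS[symmetric] modc_def by (rule dtv_map)
      ultimately show "H \<in> modc -` {H. dtv T' H \<le> eps}" by simp
    qed
    have z0: "0 \<le> z" unfolding z_def by simp
    have zb: "z^2 * (2*R+1) \<le> 1"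
    proof -
      have p: "((4::real)^R)^2 = 16^R"
      proof -
        have "((4::real)^R)^2 = 4^(R*2)" by (rule power_mult[symmetric])
        also have "\<dots> = (4^2)^R" by (simp only: mult.commute[of R 2] power_mult)
        finally show ?thesis by simp
      qed
      have "z^2 = (real ((2*R) choose R))^2 / 16^R" unfolding z_def power_divide p ..
      then show ?thesis using central_bound_mult[of R] by (simp add: divide_le_eq)
    qed
    have tvcSim: "tvc Sim S (real J * z)"
    proof -
      have "Sim = bind_pmf T (\<lambda>x. Kx (x mod c))" unfolding Sim_def T'_def by (simp add: bind_map_pmf)
      moreover have "tvc (bind_pmf T (\<lambda>x. Kx (x mod c))) (bind_pmf T Kx) (0 + real J * z)"
      proof (rule tvc_bind[OF tvc_refl])
        fix x assume x: "x \<in> set_pmf T"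
        have supp: "\<forall>y\<in>set_pmf D. y \<le> N" if "D \<in> set Ts" for D
          using TP that set_pbd unfolding PBD_def by fastforce
        have "x \<le> sum_list W * N"
          using set_lin_comb[of Ts N x W] x supp unfolding T_def by blast
        also have "\<dots> \<le> J"
        proof -
          have "sum_list a = sum_list (0 # W @ [c])" using ha by (rule arg_cong)
          then have "sum_list W \<le> sum_list a" by simp
          then show ?thesis unfolding J_def by simp
        qed
        finally have xJ: "x div c \<le> J" using div_le_dividend le_trans by blast
        have e: "Kx x = map_pmf (\<lambda>y. x mod c + c * y) (map_pmf (\<lambda>y. y + x div c) B)"
          unfolding Kx_def map_pmf_comp
        proof (rule map_pmf_cong[OF refl])
          fix y show "x + c * y = x mod c + c * (y + x div c)"
            using mod_mult_div_eq[of x c] by (simp add: algebra_simps)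
        qed
        have k1: "Kx (x mod c) = map_pmf (\<lambda>y. x mod c + c*y) B" by (simp only: Kx_def)
        have "tvc (Kx (x mod c)) (Kx x) (real (x div c) * z)"
          unfolding k1 e
          using tvc_map[OF tvc_sym[OF tvc_shift[of "x div c" R]], of "\<lambda>y. x mod c + c * y", folded B_def z_def] .
        then show "tvc (Kx (x mod c)) (Kx x) (real J * z)"
          by (rule tvc_mono) (use xJ z0 in \<open>simp add: mult_right_mono\<close>)
      qed
      ultimately show ?thesis unfolding S_def by simp
    qed
    have "tvc (bind_pmf (iid mm Sim) AA) (bind_pmf (iid mm S) AA) (real mm * (real J * z) + 0)"
      by (rule tvc_bind[OF tvc_iid[OF tvcSim] tvc_refl])
    then have diff: "\<bar>measure_pmf.prob (bind_pmf (iid mm Sim) AA) G - measure_pmf.prob (bind_pmf (iid mm S) AA) G\<bar>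
        \<le> real mm * (real J * z)" using tvc_prob by fastforce
    have small: "real mm * real J * z \<le> delta / 2"
    proof (rule final_arith[OF _ delta _ z0 zb])
      show "nat \<lceil>(2 * (real mm * real J) / delta)^2\<rceil> \<le> R"
        unfolding R_def r_def mm_def J_def by simp
    qed simp
    have "measure_pmf.prob (bind_pmf (iid mm Sim) AA) G \<le>
          measure_pmf.prob (bind_pmf (iid mm Sim) AA) (modc -` {H. dtv T' H \<le> eps})"
      by (rule measure_pmf.finite_measure_mono[OF sub]) simp
    then have "1 - delta \<le> measure_pmf.prob (map_pmf modc (bind_pmf (iid mm Sim) AA)) {H. dtv T' H \<le> eps}"
      using learn diff small by (simp add: abs_le_iff algebra_simps)
    then have goal': "1 - delta \<le> measure_pmf.prob (run_learner A' N eps delta a mm T') {H. dtv T' H \<le> eps}"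
      unfolding run' .
    have Teq: "T' = map_pmf (\<lambda>x. x mod last a) (lin_comb (butlast (tl a)) Ts)"
      unfolding T'_def T_def W_def c_def ..
    show "let T' = map_pmf (\<lambda>x. x mod last a) (lin_comb (butlast (tl a)) Ts) in
        1 - delta \<le> measure_pmf.prob (run_learner A' N eps delta a (m a eps (delta / 2)) T') {H. dtv T' H \<le> eps}"
      unfolding Let_def Teq[symmetric] mm_def[symmetric] by (rule goal')
  qed
qed

end
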